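(* Let $k=h/2$, with $h(r)=2(r-r_+)+4M\log(r/r_+)+\frac{3M^2(r_+-r)^2}{r_+r^2}+2M\arctan\frac{(C_{\mathrm{hyp}}-1)M}{r}-2M\arctan\frac{(C_{\mathrm{hyp}}-1)M}{r_+}$ and $C_{\mathrm{hyp}}\ge1$. Then $t_{\mathrm{Hor}}=v-k(r)$ is a horizon crossing time function on the domain of outer communication of a subextreme Kerr spacetime, and $k(r_+)=0$.
   Context: Kerr spacetime with $M>0$, $|a|<M$, in ingoing Eddington–Finkelstein coordinates $(v,r,\theta,\phi)$ with metric $g_{ab}=-2(dr)_{(a}(dv)_{b)}+2a\sin^2\theta(d\phi)_{(a}(dr)_{b)}+\frac{4Mar\sin^2\theta}{\Sigma}(d\phi)_{(a}(dv)_{b)}+\frac{\Delta-a^2\sin^2\theta}{\Sigma}(dv)_a(dv)_b+\frac{a^2\sin^2\theta\Delta-(a^2+r^2)^2}{\Sigma}\sin^2\theta(d\phi)_a(d\phi)_b-\Sigma(d\theta)_a(d\theta)_b$, $\Sigma=r^2+a^2\cos^2\theta$, $\Delta=r^2-2Mr+a^2$, $r_+=M+\sqrt{M^2-a^2}$; the domain of outer communication is $\{r>r_+\}$. A function $t=v-k(r)$ is horizon crossing if (a) $k$ is smooth in an open neighbourhood of $[r_+,\infty)$, (b) the level sets of $t$ are strictly spacelike in $\{r>r_+\}$, and (c) for large $r$, $k'(r)-(a^2+r^2)/\Delta=O(r^{-2})$. *)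

theory Defs
  imports "HOL-Analysis.Analysis" "HOL-Library.Landau_Symbols"
begin

definition Sigma_K :: "real \<Rightarrow> real \<Rightarrow> real \<Rightarrow> real" where
  "Sigma_K a r \<theta> = r\<^sup>2 + a\<^sup>2 * (cos \<theta>)\<^sup>2"

definition Delta_K :: "real \<Rightarrow> real \<Rightarrow> real \<Rightarrow> real" where
  "Delta_K M a r = r\<^sup>2 - 2 * M * r + a\<^sup>2"

definition r_plus :: "real \<Rightarrow> real \<Rightarrow> real" where
  "r_plus M a = M + sqrt (M\<^sup>2 - a\<^sup>2)"

text \<open>Kerr metric in ingoing Eddington--Finkelstein coordinates (v,r,theta,phi), evaluated
  on a vector with components (Xv, Xr, Xth, Xph) at the point with coordinates r, theta
  (the metric does not depend on v, phi). Signature (+,-,-,-).\<close>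
definition kerr_g :: "real \<Rightarrow> real \<Rightarrow> real \<Rightarrow> real \<Rightarrow> real \<times> real \<times> real \<times> real \<Rightarrow> real" where
  "kerr_g M a r \<theta> X = (case X of (Xv, Xr, Xth, Xph) \<Rightarrow>
     (let \<Sigma> = Sigma_K a r \<theta>; \<Delta> = Delta_K M a r; s2 = (sin \<theta>)\<^sup>2 in
       - 2 * Xr * Xv
       + 2 * a * s2 * Xph * Xr
       + (4 * M * a * r * s2 / \<Sigma>) * Xph * Xv
       + ((\<Delta> - a\<^sup>2 * s2) / \<Sigma>) * Xv\<^sup>2
       + ((a\<^sup>2 * s2 * \<Delta> - (a\<^sup>2 + r\<^sup>2)\<^sup>2) / \<Sigma>) * s2 * Xph\<^sup>2
       - \<Sigma> * Xth\<^sup>2))"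

definition smooth_on :: "real set \<Rightarrow> (real \<Rightarrow> real) \<Rightarrow> bool" where
  "smooth_on U f \<longleftrightarrow> (\<forall>n. ((deriv ^^ n) f) differentiable_on U)"

text \<open>A horizon crossing function t = v - k(r).\<close>
definition horizon_crossing :: "real \<Rightarrow> real \<Rightarrow> (real \<Rightarrow> real) \<Rightarrow> bool" where
  "horizon_crossing M a k \<longleftrightarrow>
     (\<exists>U. open U \<and> {r_plus M a..} \<subseteq> U \<and> smooth_on U k)
   \<and> (\<forall>r \<theta> Xv Xr Xth Xph. r > r_plus M a \<and> 0 < \<theta> \<and> \<theta> < pi
        \<and> Xv = deriv k r * Xr \<and> (Xv, Xr, Xth, Xph) \<noteq> (0, 0, 0, 0)
        \<longrightarrow> kerr_g M a r \<theta> (Xv, Xr, Xth, Xph) < 0)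
   \<and> (\<lambda>r. deriv k r - (a\<^sup>2 + r\<^sup>2) / Delta_K M a r) \<in> O[at_top](\<lambda>r. 1 / r\<^sup>2)"

definition h_hor :: "real \<Rightarrow> real \<Rightarrow> real \<Rightarrow> real \<Rightarrow> real" where
  "h_hor M a C r = 2 * (r - r_plus M a) + 4 * M * ln (r / r_plus M a)
     + 3 * M\<^sup>2 * (r_plus M a - r)\<^sup>2 / (r_plus M a * r\<^sup>2)
     + 2 * M * arctan ((C - 1) * M / r) - 2 * M * arctan ((C - 1) * M / r_plus M a)"

end

theory Submission
  imports Defs "HOL-Real_Asymp.Real_Asymp"
begin

inductive_set SF :: "(real \<Rightarrow> real) set" where
  sf_const: "(\<lambda>x. c) \<in> SF"
| sf_id: "(\<lambda>x. x) \<in> SF"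
| sf_add: "f \<in> SF \<Longrightarrow> g \<in> SF \<Longrightarrow> (\<lambda>x. f x + g x) \<in> SF"
| sf_mult: "f \<in> SF \<Longrightarrow> g \<in> SF \<Longrightarrow> (\<lambda>x. f x * g x) \<in> SF"
| sf_inv: "f \<in> SF \<Longrightarrow> (\<forall>x>0. f x \<noteq> 0) \<Longrightarrow> (\<lambda>x. inverse (f x)) \<in> SF"
| sf_ln: "f \<in> SF \<Longrightarrow> (\<forall>x>0. f x > 0) \<Longrightarrow> (\<lambda>x. ln (f x)) \<in> SF"
| sf_arctan: "f \<in> SF \<Longrightarrow> (\<lambda>x. arctan (f x)) \<in> SF"
| sf_cong: "f \<in> SF \<Longrightarrow> (\<forall>x>0. g x = f x) \<Longrightarrow> g \<in> SF"

lemma SF_deriv: "f \<in> SF \<Longrightarrow> \<exists>g\<in>SF. \<forall>x>0. (f has_real_derivative g x) (at x)"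
proof (induction rule: SF.induct)
  case (sf_const c)
  show ?case by (intro bexI[of _ "\<lambda>x. 0"] allI impI SF.intros(1-7)) auto
next
  case sf_id
  show ?case by (intro bexI[of _ "\<lambda>x. 1"] allI impI SF.intros(1-7)) auto
next
  case (sf_add f g)
  then obtain f' g' where "f' \<in> SF" "g' \<in> SF" "\<forall>x>0. (f has_real_derivative f' x) (at x)"
    "\<forall>x>0. (g has_real_derivative g' x) (at x)" by blast
  then show ?case
    by (intro bexI[of _ "\<lambda>x. f' x + g' x"] allI impI SF.intros(1-7)) (auto intro: DERIV_add)
next
  case (sf_mult f g)
  then obtain f' g' where "f' \<in> SF" "g' \<in> SF" "\<forall>x>0. (f has_real_derivative f' x) (at x)"
    "\<forall>x>0. (g has_real_derivative g' x) (at x)" by blast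
  then show ?case using sf_mult.hyps
    by (intro bexI[of _ "\<lambda>x. f' x * g x + g' x * f x"] allI impI SF.intros(1-7)) (auto intro: DERIV_mult)
next
  case (sf_inv f)
  then obtain f' where f': "f' \<in> SF" "\<forall>x>0. (f has_real_derivative f' x) (at x)" by blast
  have i: "(\<lambda>x. inverse (f x)) \<in> SF" using sf_inv.hyps by (rule SF.intros(5))
  show ?case
  proof (intro bexI[of _ "\<lambda>x. (-1) * (f' x * (inverse (f x) * inverse (f x)))"] allI impI)
    fix x :: real assume "x > 0"
    then have "((\<lambda>x. inverse (f x)) has_real_derivative (- (f' x * inverse(f x ^ Suc (Suc 0))))) (at x)"
      using f' sf_inv.hyps by (intro DERIV_inverse_fun) auto
    then show "((\<lambda>x. inverse (f x)) has_real_derivative (-1) * (f' x * (inverse (f x) * inverse (f x)))) (at x)"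
      by (simp add: power2_eq_square)
  next
    show "(\<lambda>x. (-1) * (f' x * (inverse (f x) * inverse (f x)))) \<in> SF"
      using f' i by (intro SF.intros(1-4)) auto
  qed
next
  case (sf_ln f)
  then obtain f' where f': "f' \<in> SF" "\<forall>x>0. (f has_real_derivative f' x) (at x)" by blast
  have i: "(\<lambda>x. inverse (f x)) \<in> SF" using sf_ln.hyps by (intro SF.intros(1-7)) auto
  show ?case
  proof (intro bexI[of _ "\<lambda>x. f' x * inverse (f x)"] allI impI)
    fix x :: real assume "x > 0"
    then have "((\<lambda>x. ln (f x)) has_real_derivative (1 / f x * f' x)) (at x)"
      using f' sf_ln.hyps by (intro DERIV_chain2[OF DERIV_ln_divide]) auto
    then show "((\<lambda>x. ln (f x)) has_real_derivative f' x * inverse (f x)) (at x)"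
      by (simp add: field_simps)
  next
    show "(\<lambda>x. f' x * inverse (f x)) \<in> SF" using f' i by (intro SF.intros(1-4)) auto
  qed
next
  case (sf_arctan f)
  then obtain f' where f': "f' \<in> SF" "\<forall>x>0. (f has_real_derivative f' x) (at x)" by blast
  have p: "(\<lambda>x. 1 + f x * f x) \<in> SF" using sf_arctan.hyps by (intro SF.intros(1-7)) auto
  have i: "(\<lambda>x. inverse (1 + f x * f x)) \<in> SF"
  proof (rule SF.intros(5)[OF p])
    show "\<forall>x>0. 1 + f x * f x \<noteq> 0"
    proof (intro allI impI)
      fix x :: real
      have "0 \<le> f x * f x" by simp
      then show "1 + f x * f x \<noteq> 0" by linarith
    qed
  qed
  show ?case
  proof (intro bexI[of _ "\<lambda>x. f' x * inverse (1 + f x * f x)"] allI impI)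
    fix x :: real assume "x > 0"
    then have "((\<lambda>x. arctan (f x)) has_real_derivative (inverse (1 + (f x)\<^sup>2) * f' x)) (at x)"
      using f' by (intro DERIV_chain2[OF DERIV_arctan]) auto
    then show "((\<lambda>x. arctan (f x)) has_real_derivative f' x * inverse (1 + f x * f x)) (at x)"
      by (simp add: power2_eq_square mult.commute)
  next
    show "(\<lambda>x. f' x * inverse (1 + f x * f x)) \<in> SF" using f' i by (intro SF.intros(1-4)) auto
  qed
next
  case (sf_cong f g)
  then obtain f' where f': "f' \<in> SF" "\<forall>x>0. (f has_real_derivative f' x) (at x)" by blast
  show ?case
  proof (intro bexI[OF _ f'(1)] allI impI)
    fix x :: real assume x: "x > 0"
    show "(g has_real_derivative f' x) (at x)"
      by (rule has_field_derivative_transform_within_open[of f _ _ "{0<..}"])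
         (use f' x sf_cong.hyps in auto)
  qed
qed

lemma SF_iter: "f \<in> SF \<Longrightarrow> (deriv ^^ n) f \<in> SF"
proof (induction n)
  case 0 then show ?case by simp
next
  case (Suc n)
  then obtain g where g: "g \<in> SF" "\<forall>x>0. ((deriv ^^ n) f has_real_derivative g x) (at x)"
    using SF_deriv by blast
  have "\<forall>x>0. (deriv ^^ Suc n) f x = g x" using g by (auto intro: DERIV_imp_deriv)
  then show ?case by (rule SF.intros(8)[OF g(1)])
qed

lemma SF_smooth: "f \<in> SF \<Longrightarrow> smooth_on {0<..} f"
  unfolding smooth_on_def
proof
  fix n assume "f \<in> SF"
  then obtain g where g: "\<forall>x>0. ((deriv ^^ n) f has_real_derivative g x) (at x)"
    using SF_deriv SF_iter by blast
  show "(deriv ^^ n) f differentiable_on {0<..}"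
    unfolding differentiable_on_def
  proof
    fix x :: real assume "x \<in> {0<..}"
    then have d: "((deriv ^^ n) f has_real_derivative g x) (at x)" using g by auto
    show "(deriv ^^ n) f differentiable at x within {0<..}"
      unfolding differentiable_def
      using has_field_derivative_imp_has_derivative[OF has_field_derivative_at_within[OF d]] by blast
  qed
qed

lemma quad_id:
  fixes r M a s co \<kappa> Xr Xph S D P :: real
  assumes "S = r\<^sup>2 + a\<^sup>2 * co" "co = 1 - s" "D = r\<^sup>2 - 2*M*r + a\<^sup>2" "P = a\<^sup>2 + r\<^sup>2"
  shows "4*(s*(a\<^sup>2 * s*D - P\<^sup>2)) * (- 2 * S * Xr * (\<kappa>*Xr) + 2 * a * s * S * Xph * Xr
     + 4 * M * a * r * s * Xph * (\<kappa>*Xr) + (D - a\<^sup>2 * s) * (\<kappa>*Xr)\<^sup>2 + (a\<^sup>2 * s*D - P\<^sup>2) * s * Xph\<^sup>2)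
   = (2*(s*(a\<^sup>2 * s*D - P\<^sup>2))*Xph + 2*a* s*(S + 2*M*r*\<kappa>)*Xr)\<^sup>2
     - 4* s*S\<^sup>2 * (D*\<kappa>\<^sup>2 - 2*P*\<kappa> + a\<^sup>2 * s)*Xr\<^sup>2"
  unfolding assms by algebra

lemma E_neg:
  fixes r M a s \<kappa> D P :: real
  assumes "D = r\<^sup>2 - 2*M*r + a\<^sup>2" "P = a\<^sup>2 + r\<^sup>2" "s \<le> 1" "D > 0"
    "a\<^sup>2 \<le> M\<^sup>2" "M > 0" "r > M"
    "0 \<le> \<kappa> - 1" "(\<kappa> - 1) * (r - M) \<le> r"
  shows "D*\<kappa>\<^sup>2 - 2*P*\<kappa> + a\<^sup>2 * s < 0"
proof -
  define e where "e = \<kappa> - 1"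
  have k: "\<kappa> = 1 + e" using e_def by simp
  have "a\<^sup>2 * s \<le> a\<^sup>2" using assms(3) by (simp add: mult_left_le)
  have id: "D*\<kappa>\<^sup>2 - 2*P*\<kappa> + a\<^sup>2 = r\<^sup>2 * e\<^sup>2 + a\<^sup>2 * e\<^sup>2 - r\<^sup>2 - 2*M*r*(1+e)\<^sup>2"
    unfolding k assms(1,2) by algebra
  have "a\<^sup>2 * e\<^sup>2 \<le> M\<^sup>2 * e\<^sup>2" using assms(5) by (simp add: mult_right_mono)
  have e0: "0 \<le> e" "e*(r-M) \<le> r" using assms e_def by auto
  have "(e*(r-M))\<^sup>2 \<le> r\<^sup>2"
    using e0 assms(7) by (intro power_mono) auto
  then have A: "r\<^sup>2 * e\<^sup>2 + M\<^sup>2 * e\<^sup>2 - 2*M*r*e\<^sup>2 \<le> r\<^sup>2" by (simp add: power2_eq_square algebra_simps)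
  have ex: "2*M*r*(1+e)\<^sup>2 = 2*M*r*e\<^sup>2 + 2*(2*M*r*e) + 2*M*r" by algebra
  have B: "0 \<le> M*r*e" using assms e0 by simp
  have C: "0 < M*r" using assms by simp
  show ?thesis using id A ex B C \<open>a\<^sup>2 * s \<le> a\<^sup>2\<close> \<open>a\<^sup>2 * e\<^sup>2 \<le> M\<^sup>2 * e\<^sup>2\<close>
    by linarith
qed

lemma e_bound:
  fixes r M rp c :: real
  assumes "M > 0" "M \<le> rp" "rp < r" "c \<ge> 0"
  defines "e \<equiv> 2*M/r + 3*M\<^sup>2 * (r - rp)/r^3 - c*M\<^sup>2/(r\<^sup>2 + c\<^sup>2 * M\<^sup>2)"
  shows "0 \<le> e" "e * (r - M) \<le> r"
proof -
  have r: "r > 0" using assms by simp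
  have pos: "r\<^sup>2 + c\<^sup>2 * M\<^sup>2 > 0" using r by (simp add: add_pos_nonneg)
  have "c*M*r \<le> 2*(r\<^sup>2 + c\<^sup>2 * M\<^sup>2)"
  proof -
    have "0 \<le> (r - c*M)\<^sup>2" by simp
    then have "2*(c*M*r) \<le> r\<^sup>2 + c\<^sup>2 * M\<^sup>2" by (simp add: power2_eq_square algebra_simps)
    moreover have "0 \<le> c*M*r" using assms r by simp
    moreover have "\<And>x y::real. 2*x \<le> y \<Longrightarrow> 0 \<le> x \<Longrightarrow> x \<le> 2*y" by linarith
    ultimately show ?thesis by blast
  qed
  then have X: "M*(c*M*r) \<le> M*(2*(r\<^sup>2 + c\<^sup>2 * M\<^sup>2))" using assms(1) by (intro mult_left_mono) auto
  have "c*M\<^sup>2/(r\<^sup>2 + c\<^sup>2 * M\<^sup>2) = M*(c*M*r)/(r*(r\<^sup>2 + c\<^sup>2 * M\<^sup>2))"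
  proof -
    have "r\<^sup>2 + c\<^sup>2 * M\<^sup>2 \<noteq> 0" "r \<noteq> 0" using r pos by auto
    then show ?thesis by (simp add: power2_eq_square)
  qed
  also have "\<dots> \<le> M*(2*(r\<^sup>2 + c\<^sup>2 * M\<^sup>2))/(r*(r\<^sup>2 + c\<^sup>2 * M\<^sup>2))"
    using X r pos by (intro divide_right_mono) auto
  also have "\<dots> = 2*M/r"
  proof -
    have L: "\<And>S. S \<noteq> 0 \<Longrightarrow> M*(2*S)/(r*S) = 2*M/r" by simp
    show ?thesis by (rule L) (use pos in linarith)
  qed
  finally have t1: "c*M\<^sup>2/(r\<^sup>2 + c\<^sup>2 * M\<^sup>2) \<le> 2*M/r" .
  have t2: "0 \<le> 3*M\<^sup>2 * (r - rp)/r^3" using assms r by simp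
  show "0 \<le> e" unfolding e_def using t1 t2 by linarith
  have t3: "0 \<le> c*M\<^sup>2/(r\<^sup>2 + c\<^sup>2 * M\<^sup>2)" using assms pos by simp
  have t4: "3*M\<^sup>2 * (r - rp)/r^3 \<le> 3*M\<^sup>2 * (r - M)/r^3" using assms r
    by (simp add: divide_right_mono)
  have eb: "e \<le> 2*M/r + 3*M\<^sup>2 * (r - M)/r^3" unfolding e_def using t3 t4 by linarith
  have q1: "4*M*(r-M) \<le> r\<^sup>2"
  proof -
    have "0 \<le> (r - 2*M)\<^sup>2" by simp
    then show ?thesis by (simp add: power2_eq_square algebra_simps)
  qed
  have q2: "(M*(r-M))\<^sup>2 \<le> (r\<^sup>2/4)\<^sup>2" using q1 assms by (intro power_mono) auto
  have poly: "(r - M) * (2*M*r\<^sup>2 + 3*M\<^sup>2 * (r - M)) \<le> r^4"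
  proof -
    have h1: "r\<^sup>2 * (4*M*(r-M)) \<le> r\<^sup>2 * r\<^sup>2" using q1 by (intro mult_left_mono) auto
    have eq: "2*((r - M) * (2*M*r\<^sup>2 + 3*M\<^sup>2 * (r - M))) = r\<^sup>2 * (4*M*(r-M)) + 6*(M*(r-M))\<^sup>2"
      by algebra
    have e2: "(r\<^sup>2/4)\<^sup>2 = r^4/16" "r\<^sup>2 * r\<^sup>2 = r^4" by (simp_all add: power2_eq_square power4_eq_xxxx)
    have h1': "r\<^sup>2 * (4*M*(r-M)) \<le> r^4" using h1 e2 by simp
    have q2': "(M*(r-M))\<^sup>2 \<le> r^4/16" using q2 e2 by simp
    have L: "\<And>X A Q R4::real. A \<le> R4 \<Longrightarrow> 2*X = A + 6*Q \<Longrightarrow> Q \<le> R4/16 \<Longrightarrow> 0 \<le> R4 \<Longrightarrow> X \<le> R4"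
      by linarith
    show ?thesis by (rule L[OF h1' eq q2']) simp
  qed
  have "(2*M/r + 3*M\<^sup>2 * (r - M)/r^3) * (r - M) = (r - M) * (2*M*r\<^sup>2 + 3*M\<^sup>2 * (r - M)) / r^3"
    using r by (simp add: field_simps power2_eq_square power3_eq_cube)
  also have "\<dots> \<le> r^4 / r^3" using poly r by (simp add: divide_right_mono)
  also have "\<dots> = r" using r by (simp add: power4_eq_xxxx power3_eq_cube)
  finally have "(2*M/r + 3*M\<^sup>2 * (r - M)/r^3) * (r - M) \<le> r" .
  moreover have "e * (r - M) \<le> (2*M/r + 3*M\<^sup>2 * (r - M)/r^3) * (r - M)"
    using eb assms by (intro mult_right_mono) auto
  ultimately show "e * (r - M) \<le> r" by linarith
qed

lemma sf_diff: "f \<in> SF \<Longrightarrow> g \<in> SF \<Longrightarrow> (\<lambda>x. f x - g x) \<in> SF"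
proof -
  assume f: "f \<in> SF" and g: "g \<in> SF"
  have "(\<lambda>x. f x + (-1) * g x) \<in> SF" using f g by (intro SF.intros(1-7))
  then show ?thesis by (rule sf_cong) simp
qed

lemma sf_div: "f \<in> SF \<Longrightarrow> g \<in> SF \<Longrightarrow> \<forall>x>0. g x \<noteq> 0 \<Longrightarrow> (\<lambda>x. f x / g x) \<in> SF"
proof -
  assume f: "f \<in> SF" and g: "g \<in> SF" and nz: "\<forall>x>0. g x \<noteq> 0"
  have "(\<lambda>x. f x * inverse (g x)) \<in> SF" using f g nz by (intro SF.intros(1-7))
  then show ?thesis by (rule sf_cong) (simp add: divide_inverse)
qed

lemma sf_pow2: "f \<in> SF \<Longrightarrow> (\<lambda>x. (f x)\<^sup>2) \<in> SF"
proof -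
  assume f: "f \<in> SF"
  have "(\<lambda>x. f x * f x) \<in> SF" using f by (intro SF.intros(1-7))
  then show ?thesis by (rule sf_cong) (simp add: power2_eq_square)
qed

lemma k_deriv:
  fixes M a C r rp c :: real
  assumes r: "r > 0" and rp: "rp > 0" and rpd: "rp = r_plus M a" and cd: "c = C - 1"
  shows "((\<lambda>r. h_hor M a C r / 2) has_real_derivative
     (1 + 2*M/r + 3*M\<^sup>2 * (r - rp)/r^3 - c*M\<^sup>2/(r\<^sup>2 + c\<^sup>2 * M\<^sup>2))) (at r)"
proof -
  have "((\<lambda>r. h_hor M a C r / 2) has_real_derivative
     (2 + 4*M*(1/rp / (r/rp)) + 3*M\<^sup>2 * ((2 * (rp - r) * (-1)) * (rp * r\<^sup>2) - (rp - r)\<^sup>2 * (rp * (2*r))) / (rp*r\<^sup>2)\<^sup>2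
       + 2*M*(inverse (1 + (c*M/r)\<^sup>2) * (- (c*M) / r\<^sup>2))) / 2) (at r)"
    unfolding h_hor_def rpd[symmetric] cd[symmetric]
    using r rp
    by (auto intro!: derivative_eq_intros simp: field_simps power2_eq_square)
  note D0 = this
  have t1: "4*M*(1/rp / (r/rp)) = 2*(2*M/r)" using r rp by simp
  have t2: "3*M\<^sup>2 * ((2 * (rp - r) * (-1)) * (rp * r\<^sup>2) - (rp - r)\<^sup>2 * (rp * (2*r))) / (rp*r\<^sup>2)\<^sup>2
      = 2*(3*M\<^sup>2 * (r - rp)/r^3)"
    using r rp by (simp add: field_simps power2_eq_square power3_eq_cube)
  have t3: "2*M*(inverse (1 + (c*M/r)\<^sup>2) * (- (c*M) / r\<^sup>2)) = - (2*(c*M\<^sup>2/(r\<^sup>2 + c\<^sup>2 * M\<^sup>2)))"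
  proof -
    have "0 < r\<^sup>2 + c\<^sup>2 * M\<^sup>2" using r by (simp add: add_pos_nonneg)
    then have p: "r\<^sup>2 + c\<^sup>2 * M\<^sup>2 \<noteq> 0" by simp
    have "1 + (c*M/r)\<^sup>2 = (r\<^sup>2 + c\<^sup>2 * M\<^sup>2) / r\<^sup>2" using r by (simp add: field_simps power2_eq_square)
    then show ?thesis using r p by (simp add: field_simps power2_eq_square)
  qed
  have L: "\<And>A B X::real. (2 + 2*A + 2*B + - (2*X))/2 = 1 + A + B - X" by simp
  show ?thesis
    by (rule DERIV_cong[OF D0]) (simp only: t1 t2 t3 L)
qed

lemma g_gen:
  fixes S Xr \<kappa> a s Xph M r D P Xth :: real
  assumes "S \<noteq> 0"
  shows "- 2 * Xr * (\<kappa>*Xr) + 2 * a * s * Xph * Xr + 4 * M * a * r * s / S * Xph * (\<kappa>*Xr)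
     + (D - a\<^sup>2 * s) / S * (\<kappa>*Xr)\<^sup>2 + (a\<^sup>2 * s * D - P\<^sup>2) / S * s * Xph\<^sup>2 - S * Xth\<^sup>2
   = (- 2 * S * Xr * (\<kappa>*Xr) + 2 * a * s * S * Xph * Xr
     + 4 * M * a * r * s * Xph * (\<kappa>*Xr) + (D - a\<^sup>2 * s) * (\<kappa>*Xr)\<^sup>2 + (a\<^sup>2 * s * D - P\<^sup>2) * s * Xph\<^sup>2) / S - S * Xth\<^sup>2"
  using assms by (simp add: field_simps)

theorem lemma2p22:
  fixes M a C_hyp :: real
  assumes "M > 0" and "\<bar>a\<bar> < M" and "C_hyp \<ge> 1"
  shows "horizon_crossing M a (\<lambda>r. h_hor M a C_hyp r / 2)
       \<and> h_hor M a C_hyp (r_plus M a) / 2 = 0"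
proof -
  define rp where "rp = r_plus M a"
  define c where "c = C_hyp - 1"
  define k where "k = (\<lambda>r. h_hor M a C_hyp r / 2)"
  define kp where "kp = (\<lambda>r. 1 + 2*M/r + 3*M\<^sup>2 * (r - rp)/r^3 - c*M\<^sup>2/(r\<^sup>2 + c\<^sup>2 * M\<^sup>2))"
  have "\<bar>a\<bar>\<^sup>2 < M\<^sup>2" using assms by (intro power_strict_mono) auto
  then have a2: "a\<^sup>2 < M\<^sup>2" by simp
  define sq where "sq = sqrt (M\<^sup>2 - a\<^sup>2)"
  have sq0: "0 \<le> sq" and sq2: "sq\<^sup>2 = M\<^sup>2 - a\<^sup>2" using a2 by (auto simp: sq_def)
  have rp_eq: "rp = M + sq" by (simp add: rp_def r_plus_def sq_def)
  have rpM: "M \<le> rp" and rp0: "0 < rp" using rp_eq sq0 assms by auto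
  have c0: "0 \<le> c" using assms c_def by simp
  have dk: "deriv k r = kp r" if "r > 0" for r
    unfolding k_def kp_def by (rule DERIV_imp_deriv, rule k_deriv[OF that rp0 rp_def c_def])
  have kSF: "k \<in> SF"
    unfolding k_def h_hor_def rp_def[symmetric] c_def[symmetric]
    by (intro SF.intros(1-7) sf_diff sf_div sf_pow2) (use rp0 in \<open>auto simp: less_imp_neq[OF rp0, symmetric]\<close>)
  have P1: "\<exists>U. open U \<and> {rp..} \<subseteq> U \<and> smooth_on U k"
    by (intro exI[of _ "{0<..}"]) (use rp0 SF_smooth[OF kSF] in auto)
  have P2: "kerr_g M a r \<theta> (Xv, Xr, Xth, Xph) < 0"
    if H: "r > rp" "0 < \<theta>" "\<theta> < pi" "Xv = deriv k r * Xr" "(Xv, Xr, Xth, Xph) \<noteq> (0, 0, 0, 0)"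
    for r \<theta> Xv Xr Xth Xph
  proof -
    have r0: "r > 0" using H rp0 by simp
    define \<kappa> where "\<kappa> = kp r"
    have Xv: "Xv = \<kappa> * Xr" using H dk r0 \<kappa>_def by simp
    define s where "s = (sin \<theta>)\<^sup>2"
    define co where "co = (cos \<theta>)\<^sup>2"
    have "0 < sin \<theta>" using H by (intro sin_gt_zero) auto
    then have s0: "0 < s" by (simp add: s_def)
    have s1: "s \<le> 1" by (simp add: s_def abs_square_le_1)
    have co: "co = 1 - s" unfolding s_def co_def by (simp add: cos_squared_eq)
    define S where "S = Sigma_K a r \<theta>"
    define D where "D = Delta_K M a r"
    define P where "P = a\<^sup>2 + r\<^sup>2"
    have Sd: "S = r\<^sup>2 + a\<^sup>2 * co" by (simp add: S_def Sigma_K_def co_def)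
    have Dd: "D = r\<^sup>2 - 2*M*r + a\<^sup>2" by (simp add: D_def Delta_K_def)
    have S0: "S > 0" using Sd r0 co s1 by (simp add: add_pos_nonneg)
    have D0: "D > 0"
    proof -
      have "sq < r - M" using H rp_eq by simp
      then have "sq\<^sup>2 < (r - M)\<^sup>2" using sq0 by (intro power_strict_mono) auto
      then show ?thesis using sq2 Dd by (simp add: power2_eq_square algebra_simps)
    qed
    have km: "\<kappa> - 1 = 2*M/r + 3*M\<^sup>2 * (r - rp)/r^3 - c*M\<^sup>2/(r\<^sup>2 + c\<^sup>2 * M\<^sup>2)"
      by (simp add: \<kappa>_def kp_def)
    have eb: "0 \<le> \<kappa> - 1" "(\<kappa> - 1) * (r - M) \<le> r"
      unfolding km by (rule e_bound(1)[OF assms(1) rpM H(1) c0], rule e_bound(2)[OF assms(1) rpM H(1) c0])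
    have aM: "a\<^sup>2 \<le> M\<^sup>2" using a2 by simp
    define E where "E = D*\<kappa>\<^sup>2 - 2*P*\<kappa> + a\<^sup>2 * s"
    have E0: "E < 0" unfolding E_def
      by (rule E_neg[OF Dd P_def s1 D0 aM assms(1) _ eb]) (use H rpM in simp)
    define C' where "C' = s*(a\<^sup>2 * s * D - P\<^sup>2)"
    define B' where "B' = 2*a* s*(S + 2*M*r*\<kappa>)"
    define Q where "Q = - 2 * S * Xr * (\<kappa>*Xr) + 2 * a * s * S * Xph * Xr
     + 4 * M * a * r * s * Xph * (\<kappa>*Xr) + (D - a\<^sup>2 * s) * (\<kappa>*Xr)\<^sup>2 + (a\<^sup>2 * s * D - P\<^sup>2) * s * Xph\<^sup>2"
    have id: "4*C'*Q = (2*C'*Xph + B'*Xr)\<^sup>2 - 4* s*S\<^sup>2 * E*Xr\<^sup>2"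
      unfolding C'_def Q_def B'_def E_def by (rule quad_id[OF Sd co Dd P_def])
    have Cn: "C' < 0"
    proof -
      have "a\<^sup>2 * D * s \<le> a\<^sup>2 * D" using D0 s0 s1 by (intro mult_right_le_one_le) auto
      moreover have "a\<^sup>2 * s * D = a\<^sup>2 * D * s" by (simp add: ac_simps)
      ultimately have "a\<^sup>2 * s * D \<le> a\<^sup>2 * D" by linarith
      moreover have "a\<^sup>2 * D \<le> P * D" using D0 P_def by (intro mult_right_mono) auto
      moreover have "P * D < P * P" using D0 Dd P_def r0 assms(1)
        by (intro mult_strict_left_mono) (auto simp: add_nonneg_pos)
      ultimately have "a\<^sup>2 * s * D - P\<^sup>2 < 0" by (simp add: power2_eq_square)
      then show ?thesis unfolding C'_def using s0 by (simp add: mult_pos_neg)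
    qed
    have T: "0 \<le> - (4* s*S\<^sup>2 * E*Xr\<^sup>2)"
    proof -
      have "0 \<le> 4* s*S\<^sup>2 * (-E)*Xr\<^sup>2" using s0 E0 by (intro mult_nonneg_nonneg) auto
      then show ?thesis by simp
    qed
    have Qle: "Q \<le> 0"
    proof (rule ccontr)
      assume "\<not> Q \<le> 0"
      then have q0: "0 < Q" by simp
      have "4*C' < 0" using Cn by simp
      then have "(4*C')*Q < 0" using q0 by (rule mult_neg_pos)
      moreover have "0 \<le> (2*C'*Xph + B'*Xr)\<^sup>2" by simp
      ultimately show False using id T by simp
    qed
    have Qlt: "Q < 0" if nz: "Xr \<noteq> 0 \<or> Xph \<noteq> 0"
    proof -
      have "0 < (2*C'*Xph + B'*Xr)\<^sup>2 - 4* s*S\<^sup>2 * E*Xr\<^sup>2"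
      proof (cases "Xr = 0")
        case True
        then have "Xph \<noteq> 0" using nz by simp
        then have "0 < (2*C'*Xph + B'*Xr)\<^sup>2" using True Cn by simp
        then show ?thesis using T by linarith
      next
        case False
        have "0 < 4* s*S\<^sup>2 * (-E)*Xr\<^sup>2" using s0 E0 S0 False by (intro mult_pos_pos) auto
        moreover have "0 \<le> (2*C'*Xph + B'*Xr)\<^sup>2" by simp
        moreover have "4* s*S\<^sup>2 * (-E)*Xr\<^sup>2 = -(4* s*S\<^sup>2 * E*Xr\<^sup>2)" by simp
        ultimately show ?thesis by linarith
      qed
      then have "0 < (4*C')*Q" using id by simp
      then show ?thesis using Cn by (simp add: zero_less_mult_iff)
    qed
    have g: "kerr_g M a r \<theta> (Xv, Xr, Xth, Xph) = Q / S - S * Xth\<^sup>2"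
      unfolding kerr_g_def Let_def prod.case Xv S_def[symmetric] D_def[symmetric] s_def[symmetric]
        P_def[symmetric] Q_def
      by (rule g_gen) (use S0 in simp)
    show ?thesis
    proof (cases "Xr \<noteq> 0 \<or> Xph \<noteq> 0")
      case True
      then have "Q / S < 0" using Qlt S0 by (simp add: divide_neg_pos)
      moreover have "0 \<le> S * Xth\<^sup>2" using S0 by simp
      ultimately show ?thesis using g by simp
    next
      case False
      then have "Xth \<noteq> 0" using H(5) Xv by auto
      then have "0 < S * Xth\<^sup>2" using S0 by simp
      moreover have "Q / S \<le> 0" using Qle S0 by (simp add: divide_nonpos_pos)
      ultimately show ?thesis using g by simp
    qed
  qed
  have P3: "(\<lambda>r. deriv k r - (a\<^sup>2 + r\<^sup>2) / Delta_K M a r) \<in> O[at_top](\<lambda>r. 1 / r\<^sup>2)"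
  proof -
    have ev: "eventually (\<lambda>r. deriv k r - (a\<^sup>2 + r\<^sup>2) / Delta_K M a r =
        (1 + 2*M/r + 3*M\<^sup>2 * (r - rp)/r^3 - c*M\<^sup>2/(r\<^sup>2 + c\<^sup>2 * M\<^sup>2)) - (a\<^sup>2 + r\<^sup>2) / (r\<^sup>2 - 2*M*r + a\<^sup>2)) at_top"
      using eventually_gt_at_top[of 0] by eventually_elim (simp add: dk kp_def Delta_K_def)
    have "(\<lambda>r. (1 + 2*M/r + 3*M\<^sup>2 * (r - rp)/r^3 - c*M\<^sup>2/(r\<^sup>2 + c\<^sup>2 * M\<^sup>2)) - (a\<^sup>2 + r\<^sup>2) / (r\<^sup>2 - 2*M*r + a\<^sup>2))
        \<in> O[at_top](\<lambda>r. 1 / r\<^sup>2)" by real_asymp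
    then show ?thesis using landau_o.big.in_cong[OF ev] by simp
  qed
  have P4: "h_hor M a C_hyp (r_plus M a) / 2 = 0"
    unfolding h_hor_def rp_def[symmetric] using rp0 by simp
  have HC: "horizon_crossing M a k"
    unfolding horizon_crossing_def rp_def[symmetric]
    apply (intro conjI P1 P3 allI impI)
    apply (elim conjE)
    apply (rule P2)
        apply assumption+
    done
  show ?thesis using HC P4 unfolding k_def by (intro conjI)
qed

end
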